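(* Let $K\ge 1$, $\alpha\in[K]=\{1,\dots,K\}$ and $F\in\mathbb{Z}^+$, and consider the coded caching problem with the symmetric $(K,\alpha,F)$ FDS structure, with $N=F\binom{K}{\alpha}\ge K$ files. Let $R^\star_{\mathrm{u},\mathrm{s}}(M)$ be the optimal worst-case communication load under uncoded and selfish cache placement when each user has a cache of $M$ files. Define $R_{\mathrm{LB}}(M)$ on $[0,\alpha N/K]$ as the piecewise linear function obtained by linear interpolation between the consecutive corner points $$\big(M,R_{\mathrm{LB}}\big)=\left(t\frac{N}{K},\ \frac{\binom{\alpha}{t+1}+(K-\alpha)\binom{\alpha-1}{t}}{\binom{\alpha}{t}}\right),\qquad t\in\{0,1,\dots,\alpha\}.$$ Then $R^\star_{\mathrm{u},\mathrm{s}}(M)\ge R_{\mathrm{LB}}(M)$ for all $M\in[0,\alpha N/K]$. Moreover, at each corner point, writing $\gamma=M/N=t/K$ and $\gamma_\alpha=K\gamma/\alpha$, the corner value equals $$R_{\mathrm{LB}}=\frac{K(1-\gamma_\alpha)}{K\gamma+1}\big[(K-\alpha)\gamma+1\big].$$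
   Context: Notation: $[n]=\{1,\dots,n\}$, $[a:b]=\{a,\dots,b\}$; $\binom{n}{k}=0$ whenever $n<0$, $k<0$ or $n<k$. Symmetric $(K,\alpha,F)$ FDS structure: the library consists of $N=F\binom{K}{\alpha}$ distinct files $W_{f,\mathcal S}$, indexed by $f\in[F]$ and $\mathcal S\subseteq[K]$ with $|\mathcal S|=\alpha$; the file class $\mathcal W_{\mathcal S}=\{W_{f,\mathcal S}:f\in[F]\}$ is of interest exactly to the users in $\mathcal S$. The file demand set (FDS) of user $k\in[K]$ is $\mathcal F_k=\{W_{f,\mathcal S}: f\in[F],\ |\mathcal S|=\alpha,\ k\in\mathcal S\}$. Caching model (centralized): a server stores the $N$ files, each consisting of $B$ independent uniformly random bits, and is connected to $K$ users by an error-free shared broadcast link; each user has a cache of $MB$ bits. In the placement phase the server fills the caches without knowing the future demands. In the delivery phase each user $k$ requests one file $W_{f_k,\mathcal D_k}\in\mathcal F_k$; the server then broadcasts a message, as a function of the library and the demands, from which each user must decode its requested file using its cache contents. A pair $(M,R)$ is achievable if there is a placement and delivery scheme such that, for every admissible demand (each user requesting a file in its own FDS), the number of transmitted bits is at most $RB$. The optimal worst-case load is $\inf\{R:(M,R)\text{ achievable}\}$. Uncoded and selfish placement: the cache of each user consists of plain copies of bits of the files (uncoded), and user $k$ may cache bits of a file $W_{f,\mathcal S}$ only if $W_{f,\mathcal S}\in\mathcal F_k$, i.e. only if $k\in\mathcal S$ (selfish). $R^\star_{\mathrm{u},\mathrm{s}}(M)$ is the optimal worst-case load when the placement is restricted to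 be uncoded and selfish. *)

theory Defs
  imports Complex_Main
begin

type_synonym file_idx = "nat \<times> nat set"
type_synonym library = "file_idx \<Rightarrow> nat \<Rightarrow> bool"  (* W (f,S) b = b-th bit of W_{f,S} *)
type_synonym cache_content = "file_idx \<times> nat \<Rightarrow> bool"

definition users :: "nat \<Rightarrow> nat set" where
  "users K = {1..K}"

definition files :: "nat \<Rightarrow> nat \<Rightarrow> nat \<Rightarrow> file_idx set" where
  "files K \<alpha> F = {(f, S). f \<in> {1..F} \<and> S \<subseteq> {1..K} \<and> card S = \<alpha>}"

definition FDS :: "nat \<Rightarrow> nat \<Rightarrow> nat \<Rightarrow> nat \<Rightarrow> file_idx set" where
  "FDS K \<alpha> F k = {i \<in> files K \<alpha> F. k \<in> snd i}"

definition libraries :: "nat \<Rightarrow> nat \<Rightarrow> nat \<Rightarrow> nat \<Rightarrow> library set" where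
  "libraries K \<alpha> F B = {W. \<forall>i b. (i \<notin> files K \<alpha> F \<or> B \<le> b) \<longrightarrow> W i b = False}"

definition cache_of :: "(file_idx \<times> nat) set \<Rightarrow> library \<Rightarrow> cache_content" where
  "cache_of Z W = (\<lambda>p. if p \<in> Z then W (fst p) (snd p) else False)"

definition us_placement :: "nat \<Rightarrow> nat \<Rightarrow> nat \<Rightarrow> nat \<Rightarrow> real \<Rightarrow> nat \<Rightarrow> (file_idx \<times> nat) set \<Rightarrow> bool" where
  "us_placement K \<alpha> F B M k Z \<longleftrightarrow>
     Z \<subseteq> {(i, b). i \<in> FDS K \<alpha> F k \<and> b < B} \<and> real (card Z) \<le> M * real B"

definition demands :: "nat \<Rightarrow> nat \<Rightarrow> nat \<Rightarrow> (nat \<Rightarrow> file_idx) set" where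
  "demands K \<alpha> F = {d. \<forall>k \<in> users K. d k \<in> FDS K \<alpha> F k}"

definition achievable_us :: "nat \<Rightarrow> nat \<Rightarrow> nat \<Rightarrow> real \<Rightarrow> real \<Rightarrow> bool" where
  "achievable_us K \<alpha> F M R \<longleftrightarrow>
     (\<exists>B::nat. B > 0 \<and>
       (\<exists>Z :: nat \<Rightarrow> (file_idx \<times> nat) set.
          (\<forall>k \<in> users K. us_placement K \<alpha> F B M k (Z k)) \<and>
          (\<forall>d \<in> demands K \<alpha> F.
             \<exists>(enc :: library \<Rightarrow> bool list)
              (dec :: nat \<Rightarrow> bool list \<Rightarrow> cache_content \<Rightarrow> nat \<Rightarrow> bool).
               \<forall>W \<in> libraries K \<alpha> F B.
                 real (length (enc W)) \<le> R * real B \<and>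
                 (\<forall>k \<in> users K. \<forall>b < B. dec k (enc W) (cache_of (Z k) W) b = W (d k) b))))"

definition R_opt_us :: "nat \<Rightarrow> nat \<Rightarrow> nat \<Rightarrow> real \<Rightarrow> real" where
  "R_opt_us K \<alpha> F M = Inf {R. achievable_us K \<alpha> F M R}"

definition num_files :: "nat \<Rightarrow> nat \<Rightarrow> nat \<Rightarrow> nat" where
  "num_files K \<alpha> F = F * (K choose \<alpha>)"

definition corner_M :: "nat \<Rightarrow> nat \<Rightarrow> nat \<Rightarrow> nat \<Rightarrow> real" where
  "corner_M K \<alpha> F t = real t * real (num_files K \<alpha> F) / real K"

definition corner_R :: "nat \<Rightarrow> nat \<Rightarrow> nat \<Rightarrow> real" where
  "corner_R K \<alpha> t =
     (real (\<alpha> choose (t + 1)) + real (K - \<alpha>) * real ((\<alpha> - 1) choose t)) / real (\<alpha> choose t)"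

definition R_LB :: "nat \<Rightarrow> nat \<Rightarrow> nat \<Rightarrow> real \<Rightarrow> real" where
  "R_LB K \<alpha> F M =
     (let t = min (\<alpha> - 1) (nat \<lfloor>M * real K / real (num_files K \<alpha> F)\<rfloor>);
          M0 = corner_M K \<alpha> F t; M1 = corner_M K \<alpha> F (t + 1);
          lam = (M - M0) / (M1 - M0)
      in (1 - lam) * corner_R K \<alpha> t + lam * corner_R K \<alpha> (t + 1))"

end

theory Submission
  imports Defs "HOL-Combinatorics.Permutations"
begin



definition cR :: "nat \<Rightarrow> nat \<Rightarrow> real \<Rightarrow> real" where
  "cR K \<alpha> u = (real \<alpha> - u) / (u + 1) + (real K - real \<alpha>) * (real \<alpha> - u) / real \<alpha>"

lemma corner_R_cR:
  assumes "1 \<le> \<alpha>" "\<alpha> \<le> K" "t \<le> \<alpha>"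
  shows "corner_R K \<alpha> t = cR K \<alpha> (real t)"
proof -
  have pos: "real (\<alpha> choose t) > 0" using assms by simp
  have e1: "real (t+1) * real (\<alpha> choose (t+1)) = real \<alpha> * real ((\<alpha>-1) choose t)"
  proof -
    have "(t+1) * (\<alpha> choose (t+1)) = \<alpha> * ((\<alpha>-1) choose t)" using binomial_absorption[of t \<alpha>] by simp
    then show ?thesis by (metis of_nat_mult)
  qed
  have e2: "real (\<alpha> - t) * real (\<alpha> choose t) = real \<alpha> * real ((\<alpha>-1) choose t)"
    using binomial_absorb_comp[of \<alpha> t] by (metis of_nat_mult)
  have e3: "real (\<alpha> - t) = real \<alpha> - real t" using assms by simp
  have e4: "real (K - \<alpha>) = real K - real \<alpha>" using assms by simp
  have a1: "real (\<alpha> choose (t+1)) = (real \<alpha> - real t) * real (\<alpha> choose t) / (real t + 1)"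
    using e1 e2 e3 by (simp add: field_simps)
  have a2: "real ((\<alpha>-1) choose t) = (real \<alpha> - real t) * real (\<alpha> choose t) / real \<alpha>"
    using e2 e3 assms by (simp add: field_simps)
  have p1: "real \<alpha> > 0" "real t + 1 > 0" using assms by auto
  show ?thesis unfolding corner_R_def cR_def a1 a2 e4 using pos p1
    by (simp add: divide_simps) (simp add: algebra_simps)
qed

lemma part2:
  assumes "K \<ge> 1" "1 \<le> \<alpha>" "\<alpha> \<le> K" "F \<ge> 1" "t \<le> \<alpha>"
  shows "let \<gamma> = real t / real K; \<gamma>\<^sub>\<alpha> = real K * \<gamma> / real \<alpha> in
            R_LB K \<alpha> F (corner_M K \<alpha> F t) = corner_R K \<alpha> t
          \<and> corner_R K \<alpha> t
              = real K * (1 - \<gamma>\<^sub>\<alpha>) / (real K * \<gamma> + 1) * ((real K - real \<alpha>) * \<gamma> + 1)"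
proof -
  have Npos: "real (num_files K \<alpha> F) > 0" using assms unfolding num_files_def by simp
  have Kpos: "real K > 0" using assms by simp
  have fl: "corner_M K \<alpha> F t * real K / real (num_files K \<alpha> F) = real t"
    unfolding corner_M_def using Npos Kpos by simp
  have A: "R_LB K \<alpha> F (corner_M K \<alpha> F t) = corner_R K \<alpha> t"
  proof (cases "t = \<alpha>")
    case True
    then have m: "min (\<alpha> - 1) t = \<alpha> - 1" by simp
    have "corner_M K \<alpha> F (\<alpha> - 1 + 1) - corner_M K \<alpha> F (\<alpha> - 1) \<noteq> 0"
      using Npos Kpos assms unfolding corner_M_def by (simp add: field_simps)
    then show ?thesis unfolding R_LB_def Let_def fl using m True assms by simp
  next
    case False
    then have m: "min (\<alpha> - 1) t = t" using assms by simp
    show ?thesis unfolding R_LB_def Let_def fl using m by simp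
  qed
  have B: "corner_R K \<alpha> t = real K * (1 - real K * (real t / real K) / real \<alpha>) / (real K * (real t / real K) + 1) * ((real K - real \<alpha>) * (real t / real K) + 1)"
  proof -
    have p1: "real \<alpha> > 0" "real t + 1 > 0" using assms by auto
    show ?thesis unfolding corner_R_cR[OF assms(2,3,5)] cR_def using Kpos p1
      by (simp add: divide_simps) (simp add: algebra_simps)
  qed
  show ?thesis using A B by (simp add: Let_def)
qed

lemma cR_support:
  assumes "1 \<le> \<alpha>"
  shows "cR K \<alpha> (real u) \<ge> cR K \<alpha> (real t) + (real u - real t) * (cR K \<alpha> (real t + 1) - cR K \<alpha> (real t))"
proof -
  have q: "(real u - real t) * (real u - real t - 1) \<ge> 0"
  proof (cases "u \<le> t")
    case True then show ?thesis by (intro mult_nonpos_nonpos) auto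
  next
    case False then show ?thesis by (intro mult_nonneg_nonneg) auto
  qed
  have a: "real \<alpha> > 0" using assms by simp
  have h: "(real \<alpha> + 1) / (real u + 1) \<ge> (real \<alpha> + 1) / (real t + 1) + (real u - real t) * ((real \<alpha> + 1) / (real t + 2) - (real \<alpha> + 1) / (real t + 1))"
  proof -
    have "(real \<alpha> + 1) / (real u + 1) - ((real \<alpha> + 1) / (real t + 1) + (real u - real t) * ((real \<alpha> + 1) / (real t + 2) - (real \<alpha> + 1) / (real t + 1)))
       = (real \<alpha> + 1) * ((real u - real t) * (real u - real t - 1)) / ((real t + 1) * (real t + 2) * (real u + 1))"
    proof -
      have d: "real u + 1 > 0" "real t + 1 > 0" "real t + 2 > 0" by auto
      show ?thesis using d by (simp add: divide_simps) (simp add: algebra_simps)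
    qed
    also have "\<dots> \<ge> 0"
    proof -
      have "0 \<le> (real \<alpha> + 1) * ((real u - real t) * (real u - real t - 1))"
        using q by simp
      moreover have "0 < (real t + 1) * (real t + 2) * (real u + 1)" by simp
      ultimately show ?thesis by (rule divide_nonneg_pos)
    qed
    finally show ?thesis by simp
  qed
  have eq: "\<And>x::real. x \<ge> 0 \<Longrightarrow> cR K \<alpha> x = (real \<alpha> + 1) / (x + 1) - 1 + (real K - real \<alpha>) * (real \<alpha> - x) / real \<alpha>"
    unfolding cR_def by (simp add: field_simps)
  have e2: "real t + 1 + 1 = real t + 2" by simp
  have x1: "cR K \<alpha> (real u) = (real \<alpha> + 1) / (real u + 1) - 1 + (real K - real \<alpha>) * (real \<alpha> - real u) / real \<alpha>" by (rule eq) simp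
  have x2: "cR K \<alpha> (real t) = (real \<alpha> + 1) / (real t + 1) - 1 + (real K - real \<alpha>) * (real \<alpha> - real t) / real \<alpha>" by (rule eq) simp
  have x3: "cR K \<alpha> (real t + 1) = (real \<alpha> + 1) / (real t + 2) - 1 + (real K - real \<alpha>) * (real \<alpha> - (real t + 1)) / real \<alpha>" using eq[of "real t + 1"] by (simp add: e2)
  have lin: "(real K - real \<alpha>) * (real \<alpha> - real u) / real \<alpha> = (real K - real \<alpha>) * (real \<alpha> - real t) / real \<alpha> + (real u - real t) * ((real K - real \<alpha>) * (real \<alpha> - (real t + 1)) / real \<alpha> - (real K - real \<alpha>) * (real \<alpha> - real t) / real \<alpha>)"
    using a by (simp add: field_simps)
  show ?thesis unfolding x1 x2 x3 using h lin by (simp add: algebra_simps)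
qed

lemma cR_decr:
  assumes "1 \<le> \<alpha>" "\<alpha> \<le> K"
  shows "cR K \<alpha> (real t + 1) - cR K \<alpha> (real t) \<le> 0"
proof -
  have a: "real \<alpha> > 0" using assms by simp
  have eq: "\<And>x::real. x \<ge> 0 \<Longrightarrow> cR K \<alpha> x = (real \<alpha> + 1) / (x + 1) - 1 + (real K - real \<alpha>) * (real \<alpha> - x) / real \<alpha>"
    unfolding cR_def by (simp add: field_simps)
  have "(real \<alpha> + 1) / (real t + 1 + 1) \<le> (real \<alpha> + 1) / (real t + 1)"
    by (intro divide_left_mono) auto
  moreover have "(real K - real \<alpha>) * (real \<alpha> - (real t + 1)) / real \<alpha> \<le> (real K - real \<alpha>) * (real \<alpha> - real t) / real \<alpha>"
    using assms a by (intro divide_right_mono mult_left_mono) auto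
  moreover have x2: "cR K \<alpha> (real t) = (real \<alpha> + 1) / (real t + 1) - 1 + (real K - real \<alpha>) * (real \<alpha> - real t) / real \<alpha>" by (rule eq) simp
  moreover have x3: "cR K \<alpha> (real t + 1) = (real \<alpha> + 1) / (real t + 1 + 1) - 1 + (real K - real \<alpha>) * (real \<alpha> - (real t + 1)) / real \<alpha>" by (rule eq) simp
  ultimately show ?thesis by linarith
qed

lemma sum_pow2_less: "(\<Sum>i\<le>n. (2::nat)^i) < 2^(Suc n)"
  by (induction n) auto

lemma card_le_from_inj:
  fixes g :: "'a set \<Rightarrow> bool list"
  assumes "finite A" "inj_on g (Pow A)" "\<And>X. X \<subseteq> A \<Longrightarrow> length (g X) \<le> L"
  shows "card A \<le> L"
proof -
  have "g ` Pow A \<subseteq> {xs. set xs \<subseteq> (UNIV::bool set) \<and> length xs \<le> L}" using assms(3) by auto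
  then have "card (g ` Pow A) \<le> card {xs. set xs \<subseteq> (UNIV::bool set) \<and> length xs \<le> L}"
    by (intro card_mono) (auto intro: finite_subset[OF _ finite_lists_length_le[of "UNIV::bool set" L]])
  also have "\<dots> = (\<Sum>i\<le>L. 2^i)" by (subst card_lists_length_le) auto
  finally have "2 ^ card A \<le> (\<Sum>i\<le>L. (2::nat)^i)"
    using card_image[OF assms(2)] card_Pow[of A] assms(1) by simp
  then have "2 ^ card A < (2::nat) ^ Suc L" using sum_pow2_less[of L] by linarith
  then have "card A < Suc L" using power_strict_increasing_iff[of "2::nat" "card A" "Suc L"] by simp
  then show ?thesis by simp
qed

definition Wof :: "(file_idx \<times> nat) set \<Rightarrow> library" where
  "Wof X = (\<lambda>i b. (i, b) \<in> X)"

lemma acyclic_bound: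
  fixes enc :: "library \<Rightarrow> bool list" and dec :: "nat \<Rightarrow> bool list \<Rightarrow> cache_content \<Rightarrow> nat \<Rightarrow> bool"
    and J :: "nat set" and e :: "nat \<Rightarrow> file_idx" and u :: "nat \<Rightarrow> nat"
  assumes len: "\<forall>W\<in>libraries K \<alpha> F B. real (length (enc W)) \<le> R * real B"
    and finJ: "finite J"
    and efiles: "\<forall>j\<in>J. e j \<in> files K \<alpha> F"
    and einj: "inj_on e J"
    and decj: "\<forall>j\<in>J. \<forall>W\<in>libraries K \<alpha> F B. \<forall>b<B. dec (u j) (enc W) (cache_of (Z (u j)) W) b = W (e j) b"
  shows "real (card {(e j, b) | j b. j \<in> J \<and> b < B \<and> (\<forall>l\<in>J. l \<le> j \<longrightarrow> (e j, b) \<notin> Z (u l))}) \<le> R * real B"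
proof -
  define A where "A = {(e j, b) | j b. j \<in> J \<and> b < B \<and> (\<forall>l\<in>J. l \<le> j \<longrightarrow> (e j, b) \<notin> Z (u l))}"
  have Asub: "A \<subseteq> (\<lambda>(j,b). (e j, b)) ` (J \<times> {..<B})" unfolding A_def by auto
  have finA: "finite A" by (rule finite_subset[OF Asub]) (use finJ in auto)
  have lib: "Wof X \<in> libraries K \<alpha> F B" if "X \<subseteq> A" for X
    using that efiles unfolding libraries_def Wof_def A_def by auto
  have RB: "R * real B \<ge> 0" using len lib[of "{}"] by force
  define L where "L = nat \<lfloor>R * real B\<rfloor>"
  have lenL: "length (enc (Wof X)) \<le> L" if "X \<subseteq> A" for X
  proof -
    have "real (length (enc (Wof X))) \<le> R * real B" using len lib[OF that] by blast
    then have "int (length (enc (Wof X))) \<le> \<lfloor>R * real B\<rfloor>" by (simp add: le_floor_iff)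
    then show ?thesis unfolding L_def by linarith
  qed
  have inj: "inj_on (\<lambda>X. enc (Wof X)) (Pow A)"
  proof (rule inj_onI)
    fix X Y assume X: "X \<in> Pow A" and Y: "Y \<in> Pow A" and eq: "enc (Wof X) = enc (Wof Y)"
    have key: "\<forall>b. ((e j, b) \<in> X \<longleftrightarrow> (e j, b) \<in> Y)" if "j \<in> J" for j
      using that
    proof (induction j rule: less_induct)
      case (less j)
      show ?case
      proof
        fix b
        show "(e j, b) \<in> X \<longleftrightarrow> (e j, b) \<in> Y"
        proof (cases "b < B")
          case False
          then show ?thesis using X Y unfolding A_def by auto
        next
          case True
          have cache: "cache_of (Z (u j)) (Wof X) = cache_of (Z (u j)) (Wof Y)"
          proof
            fix p :: "file_idx \<times> nat"
            show "cache_of (Z (u j)) (Wof X) p = cache_of (Z (u j)) (Wof Y) p"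
            proof (cases "p \<in> Z (u j) \<and> p \<in> A")
              case True
              then obtain l b' where p: "p = (e l, b')" "l \<in> J" "b' < B"
                  "\<forall>l'\<in>J. l' \<le> l \<longrightarrow> (e l, b') \<notin> Z (u l')"
                unfolding A_def by blast
              have "\<not> j \<le> l" using p True less.prems by auto
              then have "l < j" by simp
              then have "(e l, b') \<in> X \<longleftrightarrow> (e l, b') \<in> Y" using less.IH p(2) by blast
              then show ?thesis unfolding cache_of_def Wof_def using p(1) by simp
            next
              case False
              then show ?thesis unfolding cache_of_def Wof_def using X Y by auto
            qed
          qed
          have "Wof X (e j) b = Wof Y (e j) b"
            using decj less.prems lib X Y True cache eq by (metis PowD)
          then show ?thesis unfolding Wof_def by simp
        qed
      qed
    qed
    show "X = Y"
    proof
      show "X \<subseteq> Y" using X key unfolding A_def by auto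
      show "Y \<subseteq> X" using Y key unfolding A_def by auto
    qed
  qed
  have "card A \<le> L" by (rule card_le_from_inj[OF finA inj lenL])
  then have "real (card A) \<le> real L" by simp
  also have "real L \<le> R * real B" unfolding L_def using RB by linarith
  finally show ?thesis unfolding A_def .
qed



definition Cj :: "nat \<Rightarrow> nat \<Rightarrow> nat \<Rightarrow> nat set" where
  "Cj K \<alpha> j = {j..min K (j+\<alpha>-1)} \<union> {1..j+\<alpha>-1-K}"

lemma Cj_props:
  assumes "1 \<le> \<alpha>" "\<alpha> \<le> K" "1 \<le> j" "j \<le> K"
  shows "Cj K \<alpha> j \<subseteq> {1..K}" "j \<in> Cj K \<alpha> j" "card (Cj K \<alpha> j) = \<alpha>"
    "Cj K \<alpha> j - {1..j} = {j+1..min K (j+\<alpha>-1)}"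
proof -
  show "Cj K \<alpha> j \<subseteq> {1..K}" using assms unfolding Cj_def by auto
  show "j \<in> Cj K \<alpha> j" using assms unfolding Cj_def by auto
  have d: "{j..min K (j+\<alpha>-1)} \<inter> {1..j+\<alpha>-1-K} = {}" using assms by (auto simp: min_def split: if_splits)
  have "card (Cj K \<alpha> j) = card {j..min K (j+\<alpha>-1)} + card {1..j+\<alpha>-1-K}"
    unfolding Cj_def by (rule card_Un_disjoint) (use d in auto)
  moreover have "card {j..min K (j+\<alpha>-1)} + card {1..j+\<alpha>-1-K} = \<alpha>"
  proof (cases "j + \<alpha> - 1 \<le> K")
    case True
    then have "min K (j+\<alpha>-1) = j+\<alpha>-1" "j+\<alpha>-1-K = 0" by auto
    then show ?thesis using assms by simp
  next
    case False
    then have "min K (j+\<alpha>-1) = K" by auto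
    then show ?thesis using assms False by simp
  qed
  ultimately show "card (Cj K \<alpha> j) = \<alpha>" by simp
  show "Cj K \<alpha> j - {1..j} = {j+1..min K (j+\<alpha>-1)}"
  proof (rule set_eqI)
    fix x show "x \<in> Cj K \<alpha> j - {1..j} \<longleftrightarrow> x \<in> {j+1..min K (j+\<alpha>-1)}"
      using assms unfolding Cj_def by (simp add: min_def) arith
  qed
qed

lemma Cj_inj:
  assumes "1 \<le> \<alpha>" "\<alpha> < K" "1 \<le> j" "j \<le> K" "1 \<le> j'" "j' \<le> K" "Cj K \<alpha> j = Cj K \<alpha> j'"
  shows "j = j'"
proof (rule ccontr)
  assume ne: "j \<noteq> j'"
  have mem: "\<And>x. x \<in> Cj K \<alpha> j \<longleftrightarrow> x \<in> Cj K \<alpha> j'" using assms(7) by simp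
  have m: "\<And>x i. x \<in> Cj K \<alpha> i \<longleftrightarrow> (i \<le> x \<and> x \<le> K \<and> x \<le> i+\<alpha>-1) \<or> (1 \<le> x \<and> x \<le> i+\<alpha>-1-K)"
    unfolding Cj_def by auto
  have w: "\<exists>x. (j \<le> x \<and> x \<le> K \<and> x \<le> j+\<alpha>-1 \<or> 1 \<le> x \<and> x \<le> j+\<alpha>-1-K) \<noteq> (j' \<le> x \<and> x \<le> K \<and> x \<le> j'+\<alpha>-1 \<or> 1 \<le> x \<and> x \<le> j'+\<alpha>-1-K)"
  proof (cases "j < j'")
    case True
    define P where "P = (\<lambda>i x. (i \<le> x \<and> x \<le> K \<and> x \<le> i+\<alpha>-1 \<or> 1 \<le> x \<and> x \<le> i+\<alpha>-1-K))"
    have "P j j \<noteq> P j' j \<or> P j (j'-1) \<noteq> P j' (j'-1) \<or> P j K \<noteq> P j' K"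
    proof (cases "j \<le> j'+\<alpha>-1-K")
      case False
      then have "P j j" "\<not> P j' j" unfolding P_def using True assms(1-6) by auto
      then show ?thesis by blast
    next
      case c2: True
      show ?thesis
      proof (cases "j'-1 \<le> j+\<alpha>-1")
        case True
        then have "P j (j'-1)" "\<not> P j' (j'-1)" unfolding P_def using True \<open>j<j'\<close> c2 assms(1-6) by auto
        then show ?thesis by blast
      next
        case False
        then have "\<not> P j K" "P j' K" unfolding P_def using False \<open>j<j'\<close> c2 assms(1-6) by auto
        then show ?thesis by blast
      qed
    qed
    then show ?thesis unfolding P_def by blast
  next
    case False
    then have F: "j' < j" using ne by simp
    define P where "P = (\<lambda>i x. (i \<le> x \<and> x \<le> K \<and> x \<le> i+\<alpha>-1 \<or> 1 \<le> x \<and> x \<le> i+\<alpha>-1-K))"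
    have "P j j' \<noteq> P j' j' \<or> P j (j-1) \<noteq> P j' (j-1) \<or> P j K \<noteq> P j' K"
    proof (cases "j' \<le> j+\<alpha>-1-K")
      case False
      then have "\<not> P j j'" "P j' j'" unfolding P_def using F assms(1-6) by auto
      then show ?thesis by blast
    next
      case c2: True
      show ?thesis
      proof (cases "j-1 \<le> j'+\<alpha>-1")
        case True
        then have "\<not> P j (j-1)" "P j' (j-1)" unfolding P_def using True F c2 assms(1-6) by auto
        then show ?thesis by blast
      next
        case False
        then have "P j K" "\<not> P j' K" unfolding P_def using False F c2 assms(1-6) by auto
        then show ?thesis by blast
      qed
    qed
    then show ?thesis unfolding P_def by blast
  qed
  then show False using mem unfolding m by blast
qed

lemma modinj: assumes "(a + (x::nat)) mod F = (a + y) mod F" "x < F" "y < F" shows "x = y"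
proof -
  have "(int a + int x) mod int F = (int a + int y) mod int F" using assms(1)
    by (metis of_nat_add zmod_int)
  then have "int F dvd ((int a + int x) - (int a + int y))" by (simp only: mod_eq_dvd_iff)
  then have "int F dvd (int x - int y)" by simp
  then obtain q where q: "int x - int y = int F * q" by (auto simp: dvd_def)
  show ?thesis
  proof (rule ccontr)
    assume "x \<noteq> y"
    then have "q \<noteq> 0" using q by auto
    then have "\<bar>int F * q\<bar> \<ge> int F" by (simp add: abs_mult mult_le_cancel_left1) (smt (verit))
    then show False using q assms by linarith
  qed
qed

definition sh :: "nat \<Rightarrow> nat \<Rightarrow> nat \<Rightarrow> nat" where
  "sh F c f = (f - 1 + c) mod F + 1"

lemma sh_range: "F \<ge> 1 \<Longrightarrow> sh F c f \<in> {1..F}"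
proof -
  assume "F \<ge> 1"
  then have "(f - 1 + c) mod F < F" by simp
  then show ?thesis unfolding sh_def by simp
qed

lemma sh_bij:
  assumes "F \<ge> 1" "g \<in> {1..F}"
  shows "bij_betw (\<lambda>c. sh F c g) {..<F} {1..F}"
proof -
  have inj: "inj_on (\<lambda>c. sh F c g) {..<F}"
  proof (rule inj_onI)
    fix x y assume x: "x \<in> {..<F}" and y: "y \<in> {..<F}" and e: "sh F x g = sh F y g"
    then have "(g - 1 + x) mod F = (g - 1 + y) mod F" unfolding sh_def by simp
    then show "x = y" using x y modinj by blast
  qed
  have "(\<lambda>c. sh F c g) ` {..<F} \<subseteq> {1..F}" using sh_range[OF assms(1)] by blast
  moreover have "card ((\<lambda>c. sh F c g) ` {..<F}) = card {1..F}" using card_image[OF inj] by simp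
  ultimately have "(\<lambda>c. sh F c g) ` {..<F} = {1..F}" by (intro card_subset_eq) auto
  then show ?thesis using inj unfolding bij_betw_def by simp
qed

lemma sh_inj: assumes "F \<ge> 1" "f \<in> {1..F}" "f' \<in> {1..F}" "sh F c f = sh F c f'" shows "f = f'"
proof -
  have "(f - 1 + c) mod F = (f' - 1 + c) mod F" using assms(4) unfolding sh_def by simp
  then have "(c + (f - 1)) mod F = (c + (f' - 1)) mod F" by (simp add: add.commute)
  moreover have "f - 1 < F" "f' - 1 < F" using assms(2,3) by auto
  ultimately have "f - 1 = f' - 1" using modinj by blast
  then show ?thesis using assms(2,3) by (cases f; cases f') auto
qed


lemma sum_choose_D:
  assumes "1 \<le> \<alpha>" "\<alpha> \<le> K"
  shows "(\<Sum>j\<in>{1..K}. (card (Cj K \<alpha> j - {1..j})) choose t) = (\<alpha> choose (t+1)) + (K - \<alpha>) * ((\<alpha>-1) choose t)"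
proof -
  have c: "card (Cj K \<alpha> j - {1..j}) = min K (j+\<alpha>-1) - j" if "j \<in> {1..K}" for j
    using Cj_props(4)[OF assms, of j] that by simp
  have "(\<Sum>j\<in>{1..K}. (card (Cj K \<alpha> j - {1..j})) choose t) = (\<Sum>j\<in>{1..K}. (min K (j+\<alpha>-1) - j) choose t)"
    using c by (intro sum.cong) auto
  also have "(\<Sum>j\<in>{1..K}. (min K (j+\<alpha>-1) - j) choose t)
     = (\<Sum>j\<in>{1..K-\<alpha>+1}. (min K (j+\<alpha>-1) - j) choose t) + (\<Sum>j\<in>{K-\<alpha>+2..K}. (min K (j+\<alpha>-1) - j) choose t)"
  proof -
    have eqK: "{1..K} = {1..K-\<alpha>+1} \<union> {K-\<alpha>+2..K}" using assms by auto
    show ?thesis unfolding eqK by (rule sum.union_disjoint) auto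
  qed
  also have "(\<Sum>j\<in>{1..K-\<alpha>+1}. (min K (j+\<alpha>-1) - j) choose t) = (\<Sum>j\<in>{1..K-\<alpha>+1}. (\<alpha>-1) choose t)"
  proof (rule sum.cong)
    fix j assume "j \<in> {1..K-\<alpha>+1}"
    then have "min K (j+\<alpha>-1) = j + \<alpha> - 1" using assms by auto
    then show "(min K (j+\<alpha>-1) - j) choose t = (\<alpha>-1) choose t" by simp
  qed simp
  also have "\<dots> = (K-\<alpha>+1) * ((\<alpha>-1) choose t)" by simp
  also have "(\<Sum>j\<in>{K-\<alpha>+2..K}. (min K (j+\<alpha>-1) - j) choose t) = (\<Sum>r<\<alpha>-1. r choose t)"
  proof (rule sum.reindex_bij_witness[of _ "\<lambda>r. K - r" "\<lambda>j. K - j"])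
    fix j assume j: "j \<in> {K-\<alpha>+2..K}"
    show "K - (K - j) = j" using j by auto
    show "K - j \<in> {..<\<alpha>-1}" using j assms by auto
    have "min K (j+\<alpha>-1) = K" using j assms by auto
    then show "(K - j) choose t = (min K (j+\<alpha>-1) - j) choose t" by simp
  next
    fix r assume r: "r \<in> {..<\<alpha>-1}"
    show "K - (K - r) = r" using r assms by auto
    show "K - r \<in> {K-\<alpha>+2..K}" using r assms by auto
  qed
  also have "(K-\<alpha>+1) * ((\<alpha>-1) choose t) + (\<Sum>r<\<alpha>-1. r choose t) = (K-\<alpha>) * ((\<alpha>-1) choose t) + (\<Sum>r\<le>\<alpha>-1. r choose t)"
  proof -
    have "(\<Sum>r\<le>\<alpha>-1. r choose t) = (\<Sum>r<\<alpha>-1. r choose t) + ((\<alpha>-1) choose t)"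
      by (simp add: lessThan_Suc_atMost[symmetric])
    moreover have "(K-\<alpha>+1) * ((\<alpha>-1) choose t) = (K-\<alpha>) * ((\<alpha>-1) choose t) + ((\<alpha>-1) choose t)" by simp
    ultimately show ?thesis by simp
  qed
  also have "(\<Sum>r\<le>\<alpha>-1. r choose t) = \<alpha> choose (t+1)" using sum_choose_upper[of t "\<alpha>-1"] assms by simp
  finally show ?thesis by simp
qed



definition Wc :: "nat \<Rightarrow> nat set \<Rightarrow> nat set \<Rightarrow> nat set \<Rightarrow> nat set \<Rightarrow> nat" where
  "Wc K C P S T = card {\<pi>. \<pi> permutes {1..K} \<and> \<pi> ` C = S \<and> T \<inter> \<pi> ` P = {}}"

lemma Wc_invariant:
  assumes \<sigma>: "\<sigma> permutes {1..K}"
  shows "Wc K C P (\<sigma> ` S) (\<sigma> ` T) = Wc K C P S T"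
proof -
  define A where "A = {\<pi>. \<pi> permutes {1..K} \<and> \<pi> ` C = S \<and> T \<inter> \<pi> ` P = {}}"
  define A' where "A' = {\<pi>. \<pi> permutes {1..K} \<and> \<pi> ` C = \<sigma> ` S \<and> \<sigma> ` T \<inter> \<pi> ` P = {}}"
  have injs: "inj \<sigma>" using permutes_inj[OF \<sigma>] .
  have inj: "inj_on (\<lambda>\<pi>. \<sigma> \<circ> \<pi>) A"
    by (rule inj_onI) (metis injs fun.inj_map_strong inj_eq)
  have img: "(\<lambda>\<pi>. \<sigma> \<circ> \<pi>) ` A = A'"
  proof
    show "(\<lambda>\<pi>. \<sigma> \<circ> \<pi>) ` A \<subseteq> A'"
    proof
      fix \<rho> assume "\<rho> \<in> (\<lambda>\<pi>. \<sigma> \<circ> \<pi>) ` A"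
      then obtain \<pi> where \<pi>: "\<pi> \<in> A" "\<rho> = \<sigma> \<circ> \<pi>" by blast
      have "\<sigma> ` T \<inter> \<sigma> ` (\<pi> ` P) = \<sigma> ` (T \<inter> \<pi> ` P)" using injs by (simp add: image_Int)
      then show "\<rho> \<in> A'" using \<pi> \<sigma> unfolding A_def A'_def
        by (auto simp: permutes_compose image_comp[symmetric])
    qed
    show "A' \<subseteq> (\<lambda>\<pi>. \<sigma> \<circ> \<pi>) ` A"
    proof
      fix \<rho> assume \<rho>: "\<rho> \<in> A'"
      define \<pi> where "\<pi> = inv \<sigma> \<circ> \<rho>"
      have inv\<sigma>: "inv \<sigma> permutes {1..K}" using permutes_inv[OF \<sigma>] .
      have r: "\<sigma> \<circ> \<pi> = \<rho>" unfolding \<pi>_def using permutes_inverses(1)[OF \<sigma>] by (auto simp: fun_eq_iff)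
      have pp: "\<pi> permutes {1..K}" unfolding \<pi>_def using \<rho> inv\<sigma> unfolding A'_def by (simp add: permutes_compose)
      have c: "\<pi> ` C = S"
      proof -
        have "\<sigma> ` (\<pi> ` C) = \<sigma> ` S" using \<rho> r unfolding A'_def by (simp add: image_comp)
        then show ?thesis using injs by (simp add: inj_image_eq_iff)
      qed
      have d: "T \<inter> \<pi> ` P = {}"
      proof -
        have "\<sigma> ` (T \<inter> \<pi> ` P) = \<sigma> ` T \<inter> \<rho> ` P" using injs r by (simp add: image_Int image_comp)
        also have "\<dots> = {}" using \<rho> unfolding A'_def by simp
        finally show ?thesis by simp
      qed
      show "\<rho> \<in> (\<lambda>\<pi>. \<sigma> \<circ> \<pi>) ` A" using pp c d r unfolding A_def by blast
    qed
  qed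
  show ?thesis unfolding Wc_def A_def[symmetric] A'_def[symmetric] using card_image[OF inj] img by simp
qed

lemma exists_perm_map:
  fixes K :: nat and S T S' T' :: "nat set"
  assumes "T \<subseteq> S" "S \<subseteq> {1..K}" "T' \<subseteq> S'" "S' \<subseteq> {1..K}" "card S = card S'" "card T = card T'"
  shows "\<exists>\<sigma>. \<sigma> permutes {1..K} \<and> \<sigma> ` S = S' \<and> \<sigma> ` T = T'"
proof -
  have f1: "finite S" using assms(2) by (rule finite_subset) simp
  have f2: "finite S'" using assms(4) by (rule finite_subset) simp
  have f3: "finite T" using assms(1) f1 by (rule finite_subset)
  have f4: "finite T'" using assms(3) f2 by (rule finite_subset)
  note fin = f1 f2 f3 f4
  obtain g1 where g1: "bij_betw g1 T T'" using fin assms(6) finite_same_card_bij by blast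
  have "card (S - T) = card (S' - T')" using assms fin by (simp add: card_Diff_subset)
  then obtain g2 where g2: "bij_betw g2 (S - T) (S' - T')" using fin finite_same_card_bij by (meson finite_Diff)
  have "card ({1..K} - S) = card ({1..K} - S')" using assms fin by (simp add: card_Diff_subset)
  then obtain g3 where g3: "bij_betw g3 ({1..K} - S) ({1..K} - S')" using finite_same_card_bij by (meson finite_Diff finite_atLeastAtMost)
  define \<sigma> where "\<sigma> x = (if x \<in> T then g1 x else if x \<in> S then g2 x else if x \<in> {1..K} then g3 x else x)" for x
  have b1: "bij_betw \<sigma> T T'" using g1 by (rule bij_betw_cong[THEN iffD1, rotated]) (auto simp: \<sigma>_def)
  have b2: "bij_betw \<sigma> (S - T) (S' - T')" using g2 by (rule bij_betw_cong[THEN iffD1, rotated]) (auto simp: \<sigma>_def)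
  have b3: "bij_betw \<sigma> ({1..K} - S) ({1..K} - S')" using g3 by (rule bij_betw_cong[THEN iffD1, rotated]) (use assms(1) in \<open>auto simp: \<sigma>_def\<close>)
  have b12: "bij_betw \<sigma> (T \<union> (S - T)) (T' \<union> (S' - T'))" by (rule bij_betw_combine[OF b1 b2]) auto
  have b12': "bij_betw \<sigma> S S'" using b12 assms by (simp add: Un_absorb1 Un_Diff_cancel)
  have b123: "bij_betw \<sigma> (S \<union> ({1..K} - S)) (S' \<union> ({1..K} - S'))" by (rule bij_betw_combine[OF b12' b3]) auto
  have "bij_betw \<sigma> {1..K} {1..K}" using b123 assms by (simp add: Un_absorb1 Un_Diff_cancel)
  moreover have "\<And>x. x \<notin> {1..K} \<Longrightarrow> \<sigma> x = x" using assms unfolding \<sigma>_def by auto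
  ultimately have "\<sigma> permutes {1..K}" by (rule bij_imp_permutes)
  moreover have "\<sigma> ` S = S'" using b12' by (simp add: bij_betw_def)
  moreover have "\<sigma> ` T = T'" using b1 by (simp add: bij_betw_def)
  ultimately show ?thesis by blast
qed

definition Pairs :: "nat \<Rightarrow> nat \<Rightarrow> nat \<Rightarrow> (nat set \<times> nat set) set" where
  "Pairs K \<alpha> t = {(S,T). S \<subseteq> {1..K} \<and> card S = \<alpha> \<and> T \<subseteq> S \<and> card T = t}"

lemma Pairs_Sigma: "Pairs K \<alpha> t = Sigma {S. S \<subseteq> {1..K} \<and> card S = \<alpha>} (\<lambda>S. {T. T \<subseteq> S \<and> card T = t})"
  unfolding Pairs_def by auto

lemma finite_Pairs: "finite (Pairs K \<alpha> t)"
proof -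
  have "Pairs K \<alpha> t \<subseteq> Pow {1..K} \<times> Pow {1..K}" unfolding Pairs_def by auto
  then show ?thesis by (rule finite_subset) auto
qed

lemma card_Pairs: "card (Pairs K \<alpha> t) = (K choose \<alpha>) * (\<alpha> choose t)"
proof -
  have fS: "finite {S. S \<subseteq> {1..K} \<and> card S = \<alpha>}" by (rule finite_subset[of _ "Pow {1..K}"]) auto
  have "card (Pairs K \<alpha> t) = (\<Sum>S\<in>{S. S \<subseteq> {1..K} \<and> card S = \<alpha>}. card {T. T \<subseteq> S \<and> card T = t})"
    unfolding Pairs_Sigma
  proof (rule card_SigmaI[OF fS], rule ballI)
    fix S assume "S \<in> {S. S \<subseteq> {1..K} \<and> card S = \<alpha>}"
    then have "S \<subseteq> {1..K}" by simp
    then have "finite S" using finite_subset by blast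
    then have "finite (Pow S)" by simp
    moreover have "{T. T \<subseteq> S \<and> card T = t} \<subseteq> Pow S" by auto
    ultimately show "finite {T. T \<subseteq> S \<and> card T = t}" using finite_subset by blast
  qed
  also have "\<dots> = (\<Sum>S\<in>{S. S \<subseteq> {1..K} \<and> card S = \<alpha>}. \<alpha> choose t)"
  proof (rule sum.cong)
    fix S assume "S \<in> {S. S \<subseteq> {1..K} \<and> card S = \<alpha>}"
    then have "S \<subseteq> {1..K}" "card S = \<alpha>" by auto
    then have "finite S" "card S = \<alpha>" using finite_subset by blast+
    then show "card {T. T \<subseteq> S \<and> card T = t} = \<alpha> choose t" by (simp add: n_subsets)
  qed simp
  also have "\<dots> = (K choose \<alpha>) * (\<alpha> choose t)" by (simp add: n_subsets)
  finally show ?thesis .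
qed

lemma total_Wc:
  assumes C: "C \<subseteq> {1..K}" "card C = \<alpha>"
  shows "(\<Sum>x\<in>Pairs K \<alpha> t. Wc K C P (fst x) (snd x)) = fact K * (card (C - P) choose t)"
proof -
  define Perm where "Perm = {\<pi>. \<pi> permutes {1..K}}"
  have fP: "finite Perm" unfolding Perm_def by (rule finite_permutations) simp
  have cP: "card Perm = fact K" unfolding Perm_def by (rule card_permutations) auto
  have "(\<Sum>x\<in>Pairs K \<alpha> t. Wc K C P (fst x) (snd x))
      = (\<Sum>x\<in>Pairs K \<alpha> t. \<Sum>\<pi>\<in>Perm. if \<pi> ` C = fst x \<and> snd x \<inter> \<pi> ` P = {} then 1 else 0)"
  proof (rule sum.cong)
    fix x
    have "Wc K C P (fst x) (snd x) = card {\<pi>\<in>Perm. \<pi> ` C = fst x \<and> snd x \<inter> \<pi> ` P = {}}"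
      unfolding Wc_def Perm_def by (rule arg_cong[where f=card]) auto
    also have "\<dots> = (\<Sum>\<pi>\<in>Perm. if \<pi> ` C = fst x \<and> snd x \<inter> \<pi> ` P = {} then 1 else 0)"
      using fP by (simp add: sum.If_cases Int_def)
    finally show "Wc K C P (fst x) (snd x) = (\<Sum>\<pi>\<in>Perm. if \<pi> ` C = fst x \<and> snd x \<inter> \<pi> ` P = {} then 1 else 0)" .
  qed simp
  also have "\<dots> = (\<Sum>\<pi>\<in>Perm. \<Sum>x\<in>Pairs K \<alpha> t. if \<pi> ` C = fst x \<and> snd x \<inter> \<pi> ` P = {} then 1 else 0)"
    by (rule sum.swap)
  also have "\<dots> = (\<Sum>\<pi>\<in>Perm. card (C - P) choose t)"
  proof (rule sum.cong)
    fix \<pi> assume "\<pi> \<in> Perm"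
    then have pp: "\<pi> permutes {1..K}" unfolding Perm_def by simp
    have inj: "inj \<pi>" using permutes_inj[OF pp] .
    have sub: "\<pi> ` C \<subseteq> {1..K}" using C(1) permutes_image[OF pp] by blast
    have cc: "card (\<pi> ` C) = \<alpha>" using C(2) card_image[OF inj_on_subset[OF inj]] by auto
    have finC: "finite (C - P)" using C(1) by (meson finite_Diff finite_atLeastAtMost finite_subset)
    have "(\<Sum>x\<in>Pairs K \<alpha> t. if \<pi> ` C = fst x \<and> snd x \<inter> \<pi> ` P = {} then 1 else 0)
        = card {x\<in>Pairs K \<alpha> t. \<pi> ` C = fst x \<and> snd x \<inter> \<pi> ` P = {}}"
      using finite_Pairs by (simp add: sum.If_cases Int_def)
    also have "{x\<in>Pairs K \<alpha> t. \<pi> ` C = fst x \<and> snd x \<inter> \<pi> ` P = {}} = (\<lambda>T. (\<pi> ` C, T)) ` {T. T \<subseteq> \<pi> ` (C - P) \<and> card T = t}"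
    proof -
      have "\<pi> ` (C - P) = \<pi> ` C - \<pi> ` P" using inj by (simp add: image_set_diff)
      note D = this
      show ?thesis
      proof
        show "{x\<in>Pairs K \<alpha> t. \<pi> ` C = fst x \<and> snd x \<inter> \<pi> ` P = {}} \<subseteq> (\<lambda>T. (\<pi> ` C, T)) ` {T. T \<subseteq> \<pi> ` (C - P) \<and> card T = t}"
        proof
          fix x assume x: "x \<in> {x\<in>Pairs K \<alpha> t. \<pi> ` C = fst x \<and> snd x \<inter> \<pi> ` P = {}}"
          obtain S T where xe: "x = (S, T)" by (cases x)
          have "S = \<pi> ` C" "T \<subseteq> S" "card T = t" "T \<inter> \<pi> ` P = {}" using x xe unfolding Pairs_def by auto
          then have "T \<in> {T. T \<subseteq> \<pi> ` (C - P) \<and> card T = t}" unfolding D by blast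
          then show "x \<in> (\<lambda>T. (\<pi> ` C, T)) ` {T. T \<subseteq> \<pi> ` (C - P) \<and> card T = t}" using xe \<open>S = \<pi> ` C\<close> by blast
        qed
        show "(\<lambda>T. (\<pi> ` C, T)) ` {T. T \<subseteq> \<pi> ` (C - P) \<and> card T = t} \<subseteq> {x\<in>Pairs K \<alpha> t. \<pi> ` C = fst x \<and> snd x \<inter> \<pi> ` P = {}}"
        proof
          fix x assume "x \<in> (\<lambda>T. (\<pi> ` C, T)) ` {T. T \<subseteq> \<pi> ` (C - P) \<and> card T = t}"
          then obtain T where T: "x = (\<pi> ` C, T)" "T \<subseteq> \<pi> ` C - \<pi> ` P" "card T = t" unfolding D by blast
          then have "T \<subseteq> \<pi> ` C" "T \<inter> \<pi> ` P = {}" by blast+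
          then show "x \<in> {x\<in>Pairs K \<alpha> t. \<pi> ` C = fst x \<and> snd x \<inter> \<pi> ` P = {}}"
            using T sub cc unfolding Pairs_def by simp
        qed
      qed
    qed
    also have "card \<dots> = card {T. T \<subseteq> \<pi> ` (C - P) \<and> card T = t}"
      by (rule card_image) (auto intro: inj_onI)
    also have "\<dots> = card (\<pi> ` (C - P)) choose t" using finC by (simp add: n_subsets)
    also have "card (\<pi> ` (C - P)) = card (C - P)" using card_image[OF inj_on_subset[OF inj]] by auto
    finally show "(\<Sum>x\<in>Pairs K \<alpha> t. if \<pi> ` C = fst x \<and> snd x \<inter> \<pi> ` P = {} then 1 else 0) = card (C - P) choose t" .
  qed simp
  also have "\<dots> = fact K * (card (C - P) choose t)" using cP by simp
  finally show ?thesis .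
qed

lemma Wc_value:
  assumes C: "C \<subseteq> {1..K}" "card C = \<alpha>" and ST: "(S,T) \<in> Pairs K \<alpha> t"
  shows "Wc K C P S T * ((K choose \<alpha>) * (\<alpha> choose t)) = fact K * (card (C - P) choose t)"
proof -
  have eq: "Wc K C P (fst x) (snd x) = Wc K C P S T" if "x \<in> Pairs K \<alpha> t" for x
  proof -
    obtain S' T' where x: "x = (S',T')" by (cases x)
    have "S' \<subseteq> {1..K}" "card S' = \<alpha>" "T' \<subseteq> S'" "card T' = t" using that x unfolding Pairs_def by auto
    moreover have "S \<subseteq> {1..K}" "card S = \<alpha>" "T \<subseteq> S" "card T = t" using ST unfolding Pairs_def by auto
    ultimately obtain \<sigma> where \<sigma>: "\<sigma> permutes {1..K}" "\<sigma> ` S = S'" "\<sigma> ` T = T'"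
      using exists_perm_map[of T S K T' S'] by auto
    show ?thesis using Wc_invariant[OF \<sigma>(1), of C P S T] \<sigma> x by simp
  qed
  have "fact K * (card (C - P) choose t) = (\<Sum>x\<in>Pairs K \<alpha> t. Wc K C P S T)"
    using total_Wc[OF C, where t=t and P=P] eq by (metis (no_types, lifting) sum.cong)
  also have "\<dots> = Wc K C P S T * ((K choose \<alpha>) * (\<alpha> choose t))" using card_Pairs by simp
  finally show ?thesis by simp
qed




lemma Wc_sum:
  "Wc K C P S T = (\<Sum>\<pi>\<in>{\<pi>. \<pi> permutes {1..K}}. if \<pi> ` C = S \<and> T \<inter> \<pi> ` P = {} then 1 else 0)"
proof -
  have fP: "finite {\<pi>. \<pi> permutes {1..K}}" by (rule finite_permutations) simp
  have "Wc K C P S T = card ({\<pi>. \<pi> permutes {1..K}} \<inter> {\<pi>. \<pi> ` C = S \<and> T \<inter> \<pi> ` P = {}})"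
    unfolding Wc_def by (rule arg_cong[where f=card]) auto
  then show ?thesis using fP by (simp add: sum.If_cases)
qed

lemma step4:
  fixes \<tau> :: "file_idx \<times> nat \<Rightarrow> nat set"
  assumes C: "C \<subseteq> {1..K}" "card C = \<alpha>" and F: "F \<ge> 1" "g \<in> {1..F}"
  shows "(\<Sum>\<pi>\<in>{\<pi>. \<pi> permutes {1..K}}. \<Sum>c<F. card {b. b < B \<and> \<tau> ((sh F c g, \<pi> ` C), b) \<inter> \<pi> ` P = {}})
       = (\<Sum>f\<in>{1..F}. \<Sum>S\<in>{S. S \<subseteq> {1..K} \<and> card S = \<alpha>}. \<Sum>b<B. Wc K C P S (\<tau> ((f, S), b)))"
proof -
  define Perm where "Perm = {\<pi>. \<pi> permutes {1..K}}"
  define Cls where "Cls = {S. S \<subseteq> {1..K} \<and> card S = \<alpha>}"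
  have fP: "finite Perm" unfolding Perm_def by (rule finite_permutations) simp
  have fC: "finite Cls" unfolding Cls_def by (rule finite_subset[of _ "Pow {1..K}"]) auto
  have cardb: "card {b. b < B \<and> Q b} = (\<Sum>b<B. if Q b then 1 else 0)" for Q :: "nat \<Rightarrow> bool"
  proof -
    have "{b. b < B \<and> Q b} = {..<B} \<inter> {b. Q b}" by auto
    then show ?thesis by (simp add: sum.If_cases)
  qed
  have "(\<Sum>\<pi>\<in>Perm. \<Sum>c<F. card {b. b < B \<and> \<tau> ((sh F c g, \<pi> ` C), b) \<inter> \<pi> ` P = {}})
      = (\<Sum>\<pi>\<in>Perm. \<Sum>f\<in>{1..F}. card {b. b < B \<and> \<tau> ((f, \<pi> ` C), b) \<inter> \<pi> ` P = {}})"
  proof (rule sum.cong)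
    fix \<pi>
    show "(\<Sum>c<F. card {b. b < B \<and> \<tau> ((sh F c g, \<pi> ` C), b) \<inter> \<pi> ` P = {}}) = (\<Sum>f\<in>{1..F}. card {b. b < B \<and> \<tau> ((f, \<pi> ` C), b) \<inter> \<pi> ` P = {}})"
      using sum.reindex_bij_betw[OF sh_bij[OF F], of "\<lambda>f. card {b. b < B \<and> \<tau> ((f, \<pi> ` C), b) \<inter> \<pi> ` P = {}}"] by simp
  qed simp
  also have "\<dots> = (\<Sum>f\<in>{1..F}. \<Sum>\<pi>\<in>Perm. card {b. b < B \<and> \<tau> ((f, \<pi> ` C), b) \<inter> \<pi> ` P = {}})"
    by (rule sum.swap)
  also have "\<dots> = (\<Sum>f\<in>{1..F}. \<Sum>S\<in>Cls. \<Sum>b<B. Wc K C P S (\<tau> ((f, S), b)))"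
  proof (rule sum.cong)
    fix f
    have "(\<Sum>S\<in>Cls. \<Sum>b<B. Wc K C P S (\<tau> ((f, S), b)))
        = (\<Sum>S\<in>Cls. \<Sum>b<B. \<Sum>\<pi>\<in>Perm. if \<pi> ` C = S \<and> \<tau> ((f, S), b) \<inter> \<pi> ` P = {} then 1 else 0)"
      unfolding Wc_sum Perm_def by simp
    also have "\<dots> = (\<Sum>S\<in>Cls. \<Sum>\<pi>\<in>Perm. \<Sum>b<B. if \<pi> ` C = S \<and> \<tau> ((f, S), b) \<inter> \<pi> ` P = {} then 1 else 0)"
      by (rule sum.cong[OF refl], rule sum.swap)
    also have "\<dots> = (\<Sum>\<pi>\<in>Perm. \<Sum>S\<in>Cls. \<Sum>b<B. if \<pi> ` C = S \<and> \<tau> ((f, S), b) \<inter> \<pi> ` P = {} then 1 else 0)"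
      by (rule sum.swap)
    also have "\<dots> = (\<Sum>\<pi>\<in>Perm. card {b. b < B \<and> \<tau> ((f, \<pi> ` C), b) \<inter> \<pi> ` P = {}})"
    proof (rule sum.cong)
      fix \<pi> assume "\<pi> \<in> Perm"
      then have pp: "\<pi> permutes {1..K}" unfolding Perm_def by simp
      have inj: "inj \<pi>" using permutes_inj[OF pp] .
      have inC: "\<pi> ` C \<in> Cls" unfolding Cls_def using C permutes_image[OF pp] card_image[OF inj_on_subset[OF inj]] by auto
      have "(\<Sum>S\<in>Cls. \<Sum>b<B. if \<pi> ` C = S \<and> \<tau> ((f, S), b) \<inter> \<pi> ` P = {} then 1 else 0)
          = (\<Sum>S\<in>Cls. if S = \<pi> ` C then (\<Sum>b<B. if \<tau> ((f, S), b) \<inter> \<pi> ` P = {} then 1 else 0) else 0)"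
      proof (rule sum.cong)
        fix S show "(\<Sum>b<B. if \<pi> ` C = S \<and> \<tau> ((f, S), b) \<inter> \<pi> ` P = {} then 1 else 0) = (if S = \<pi> ` C then (\<Sum>b<B. if \<tau> ((f, S), b) \<inter> \<pi> ` P = {} then 1 else 0) else 0)"
        proof (cases "S = \<pi> ` C")
          case True then show ?thesis by simp
        next
          case False then have ne: "\<pi> ` C \<noteq> S" by metis
          show ?thesis using ne False by (simp only: if_False simp_thms) simp
        qed
      qed simp
      also have "\<dots> = (\<Sum>b<B. if \<tau> ((f, \<pi> ` C), b) \<inter> \<pi> ` P = {} then 1 else 0)"
        using sum.delta[OF fC, of "\<pi> ` C" "\<lambda>S. \<Sum>b<B. if \<tau> ((f, S), b) \<inter> \<pi> ` P = {} then 1 else 0"] inC by (simp only: if_True)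
      also have "\<dots> = card {b. b < B \<and> \<tau> ((f, \<pi> ` C), b) \<inter> \<pi> ` P = {}}" by (rule cardb[symmetric])
      finally show "(\<Sum>S\<in>Cls. \<Sum>b<B. if \<pi> ` C = S \<and> \<tau> ((f, S), b) \<inter> \<pi> ` P = {} then 1 else 0) = card {b. b < B \<and> \<tau> ((f, \<pi> ` C), b) \<inter> \<pi> ` P = {}}" .
    qed simp
    finally show "(\<Sum>\<pi>\<in>Perm. card {b. b < B \<and> \<tau> ((f, \<pi> ` C), b) \<inter> \<pi> ` P = {}}) = (\<Sum>S\<in>Cls. \<Sum>b<B. Wc K C P S (\<tau> ((f, S), b)))" by simp
  qed simp
  finally show ?thesis unfolding Perm_def Cls_def .
qed




lemma final_arith:
  fixes X :: "'a set" and \<tau> :: "'a \<Rightarrow> nat" and N B :: nat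
  assumes fin: "finite X" and cX: "card X = N * B" and NB: "N > 0" "B > 0"
    and hc: "(\<Sum>x\<in>X. cR K \<alpha> (real (\<tau> x))) \<le> real N * R * real B"
    and hm: "(\<Sum>x\<in>X. real (\<tau> x)) \<le> real K * M * real B"
    and a: "1 \<le> \<alpha>" "\<alpha> \<le> K"
  shows "cR K \<alpha> (real t) + (real K * M / real N - real t) * (cR K \<alpha> (real t + 1) - cR K \<alpha> (real t)) \<le> R"
proof -
  define \<Delta> where "\<Delta> = cR K \<alpha> (real t + 1) - cR K \<alpha> (real t)"
  have D: "\<Delta> \<le> 0" unfolding \<Delta>_def by (rule cR_decr[OF a])
  have "(\<Sum>x\<in>X. cR K \<alpha> (real t) + (real (\<tau> x) - real t) * \<Delta>) \<le> (\<Sum>x\<in>X. cR K \<alpha> (real (\<tau> x)))"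
    by (rule sum_mono) (use cR_support[OF a(1)] in \<open>simp add: \<Delta>_def\<close>)
  also have "(\<Sum>x\<in>X. cR K \<alpha> (real t) + (real (\<tau> x) - real t) * \<Delta>)
      = real (card X) * (cR K \<alpha> (real t) - real t * \<Delta>) + \<Delta> * (\<Sum>x\<in>X. real (\<tau> x))"
    by (simp add: sum.distrib algebra_simps sum_distrib_left sum_subtractf)
  finally have h1: "real (card X) * (cR K \<alpha> (real t) - real t * \<Delta>) + \<Delta> * (\<Sum>x\<in>X. real (\<tau> x)) \<le> real N * R * real B"
    using hc by linarith
  have "\<Delta> * (real K * M * real B) \<le> \<Delta> * (\<Sum>x\<in>X. real (\<tau> x))"
    using hm D by (rule mult_left_mono_neg)
  then have h2: "real N * real B * (cR K \<alpha> (real t) - real t * \<Delta>) + \<Delta> * (real K * M * real B) \<le> real N * R * real B"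
    using h1 cX by simp
  have pos: "real N * real B > 0" using NB by simp
  have "real N * real B * (cR K \<alpha> (real t) + (real K * M / real N - real t) * \<Delta>)
      = real N * real B * (cR K \<alpha> (real t) - real t * \<Delta>) + \<Delta> * (real K * M * real B)"
    using NB by (simp add: field_simps)
  also have "\<dots> \<le> real N * real B * R" using h2 by (simp add: mult_ac)
  finally have "real N * real B * (cR K \<alpha> (real t) + (real K * M / real N - real t) * \<Delta>) \<le> real N * real B * R" .
  then show ?thesis unfolding \<Delta>_def using pos by (simp add: mult_le_cancel_left_pos)
qed

lemma R_LB_line:
  fixes M :: real
  assumes "K \<ge> 1" "1 \<le> \<alpha>" "\<alpha> \<le> K" "F \<ge> 1"
  defines "t0 \<equiv> min (\<alpha> - 1) (nat \<lfloor>M * real K / real (num_files K \<alpha> F)\<rfloor>)"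
  shows "R_LB K \<alpha> F M = cR K \<alpha> (real t0) + (real K * M / real (num_files K \<alpha> F) - real t0) * (cR K \<alpha> (real t0 + 1) - cR K \<alpha> (real t0))"
proof -
  have Npos: "real (num_files K \<alpha> F) > 0" using assms unfolding num_files_def by simp
  have Kpos: "real K > 0" using assms by simp
  have t0a: "t0 + 1 \<le> \<alpha>" "t0 \<le> \<alpha>" using assms unfolding t0_def by auto
  have lam: "(M - corner_M K \<alpha> F t0) / (corner_M K \<alpha> F (t0 + 1) - corner_M K \<alpha> F t0) = real K * M / real (num_files K \<alpha> F) - real t0"
    unfolding corner_M_def using Npos Kpos by (simp add: field_simps)
  have c1: "corner_R K \<alpha> t0 = cR K \<alpha> (real t0)" by (rule corner_R_cR) (use assms t0a in auto)
  have c2: "corner_R K \<alpha> (t0 + 1) = cR K \<alpha> (real t0 + 1)" using corner_R_cR[of \<alpha> K "t0+1"] assms t0a by (simp add: add.commute)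
  show ?thesis unfolding R_LB_def Let_def t0_def[symmetric] lam c1 c2 by (simp add: algebra_simps)
qed

definition Tc :: "(nat \<Rightarrow> (file_idx \<times> nat) set) \<Rightarrow> nat \<Rightarrow> file_idx \<times> nat \<Rightarrow> nat set" where
  "Tc Z K p = {k \<in> {1..K}. p \<in> Z k}"

definition phi :: "nat \<Rightarrow> nat \<Rightarrow> nat \<Rightarrow> nat" where
  "phi K \<alpha> j = (if \<alpha> = K then j else 1)"

definition pf :: "nat \<Rightarrow> nat \<Rightarrow> nat \<Rightarrow> (nat \<Rightarrow> nat) \<Rightarrow> nat \<Rightarrow> nat \<Rightarrow> file_idx" where
  "pf K \<alpha> F \<pi> c j = (sh F c (phi K \<alpha> j), \<pi> ` Cj K \<alpha> j)"

lemma phi_range: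
  assumes "1 \<le> \<alpha>" "\<alpha> \<le> K" "F \<ge> 1" "num_files K \<alpha> F \<ge> K" "j \<in> {1..K}"
  shows "phi K \<alpha> j \<in> {1..F}"
proof (cases "\<alpha> = K")
  case True
  then have "num_files K \<alpha> F = F" unfolding num_files_def by simp
  then show ?thesis using True assms unfolding phi_def by auto
next
  case False then show ?thesis using assms unfolding phi_def by auto
qed

lemma pf_files:
  assumes "1 \<le> \<alpha>" "\<alpha> \<le> K" "F \<ge> 1" "\<pi> permutes {1..K}" "j \<in> {1..K}"
  shows "pf K \<alpha> F \<pi> c j \<in> files K \<alpha> F"
proof -
  have inj: "inj \<pi>" using permutes_inj[OF assms(4)] .
  have s: "\<pi> ` Cj K \<alpha> j \<subseteq> {1..K}" using Cj_props(1)[OF assms(1,2), of j] assms(5) permutes_image[OF assms(4)] by auto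
  have c: "card (\<pi> ` Cj K \<alpha> j) = \<alpha>" using Cj_props(3)[OF assms(1,2), of j] assms(5) card_image[OF inj_on_subset[OF inj]] by auto
  show ?thesis unfolding pf_def files_def using s c sh_range[OF assms(3)] by auto
qed

lemma pf_inj:
  assumes "1 \<le> \<alpha>" "\<alpha> \<le> K" "F \<ge> 1" "num_files K \<alpha> F \<ge> K" "\<pi> permutes {1..K}"
  shows "inj_on (pf K \<alpha> F \<pi> c) {1..K}"
proof (rule inj_onI)
  fix j j' assume j: "j \<in> {1..K}" and j': "j' \<in> {1..K}" and e: "pf K \<alpha> F \<pi> c j = pf K \<alpha> F \<pi> c j'"
  have inj: "inj \<pi>" using permutes_inj[OF assms(5)] .
  show "j = j'"
  proof (cases "\<alpha> = K")
    case True
    have "sh F c (phi K \<alpha> j) = sh F c (phi K \<alpha> j')" using e unfolding pf_def by simp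
    then have "phi K \<alpha> j = phi K \<alpha> j'" using sh_inj[OF assms(3) phi_range[OF assms(1-4) j] phi_range[OF assms(1-4) j']] by simp
    then show ?thesis using True unfolding phi_def by simp
  next
    case False
    have "\<pi> ` Cj K \<alpha> j = \<pi> ` Cj K \<alpha> j'" using e unfolding pf_def by simp
    then have "Cj K \<alpha> j = Cj K \<alpha> j'" using inj by (simp add: inj_image_eq_iff)
    then show ?thesis using Cj_inj[of \<alpha> K j j'] False assms(1,2) j j' by auto
  qed
qed

lemma config_bound:
  fixes K \<alpha> F B :: nat and R :: real and Z :: "nat \<Rightarrow> (file_idx \<times> nat) set"
  assumes basic: "1 \<le> \<alpha>" "\<alpha> \<le> K" "F \<ge> 1" "num_files K \<alpha> F \<ge> K"
    and codes: "\<forall>d\<in>demands K \<alpha> F. \<exists>(enc :: library \<Rightarrow> bool list) (dec :: nat \<Rightarrow> bool list \<Rightarrow> cache_content \<Rightarrow> nat \<Rightarrow> bool).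
             \<forall>W \<in> libraries K \<alpha> F B. real (length (enc W)) \<le> R * real B \<and>
                 (\<forall>k \<in> users K. \<forall>b < B. dec k (enc W) (cache_of (Z k) W) b = W (d k) b)"
    and \<pi>: "\<pi> permutes {1..K}"
  shows "real (\<Sum>j\<in>{1..K}. card {b. b < B \<and> Tc Z K (pf K \<alpha> F \<pi> c j, b) \<inter> \<pi> ` {1..j} = {}}) \<le> R * real B"
proof -
  define d where "d u = pf K \<alpha> F \<pi> c (inv \<pi> u)" for u
  have invp: "inv \<pi> permutes {1..K}" using permutes_inv[OF \<pi>] .
  have dj: "d (\<pi> j) = pf K \<alpha> F \<pi> c j" for j unfolding d_def using permutes_inverses(2)[OF \<pi>] by simp
  have dd: "d \<in> demands K \<alpha> F"
    unfolding demands_def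
  proof (intro CollectI ballI)
    fix k assume k: "k \<in> users K"
    then have k': "k \<in> {1..K}" unfolding users_def by simp
    define j where "j = inv \<pi> k"
    have jK: "j \<in> {1..K}" unfolding j_def using permutes_in_image[OF invp] k' by simp
    have kj: "k = \<pi> j" unfolding j_def using permutes_inverses(1)[OF \<pi>] by simp
    have "k \<in> \<pi> ` Cj K \<alpha> j" using kj Cj_props(2)[OF basic(1,2), of j] jK by auto
    then show "d k \<in> FDS K \<alpha> F k" unfolding FDS_def using pf_files[OF basic(1-3) \<pi> jK, of c] jK
      unfolding d_def j_def[symmetric] by (simp add: pf_def)
  qed
  obtain enc :: "library \<Rightarrow> bool list" and dec :: "nat \<Rightarrow> bool list \<Rightarrow> cache_content \<Rightarrow> nat \<Rightarrow> bool" where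
    ed: "\<forall>W \<in> libraries K \<alpha> F B. real (length (enc W)) \<le> R * real B \<and>
                 (\<forall>k \<in> users K. \<forall>b < B. dec k (enc W) (cache_of (Z k) W) b = W (d k) b)"
    using codes dd by blast
  define e where "e = pf K \<alpha> F \<pi> c"
  have len: "\<forall>W\<in>libraries K \<alpha> F B. real (length (enc W)) \<le> R * real B" using ed by blast
  have efiles: "\<forall>j\<in>{1..K}. e j \<in> files K \<alpha> F" unfolding e_def using pf_files[OF basic(1-3) \<pi>] by blast
  have einj: "inj_on e {1..K}" unfolding e_def by (rule pf_inj[OF basic \<pi>])
  have decj: "\<forall>j\<in>{1..K}. \<forall>W\<in>libraries K \<alpha> F B. \<forall>b<B. dec (\<pi> j) (enc W) (cache_of (Z (\<pi> j)) W) b = W (e j) b"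
  proof (intro ballI allI impI)
    fix j W b assume j: "j \<in> {1..K}" and W: "W \<in> libraries K \<alpha> F B" and b: "b < B"
    have "\<pi> j \<in> users K" unfolding users_def using permutes_in_image[OF \<pi>] j by simp
    then show "dec (\<pi> j) (enc W) (cache_of (Z (\<pi> j)) W) b = W (e j) b" using ed W b dj unfolding e_def by metis
  qed
  have AB: "real (card {(e j, b) | j b. j \<in> {1..K} \<and> b < B \<and> (\<forall>l\<in>{1..K}. l \<le> j \<longrightarrow> (e j, b) \<notin> Z (\<pi> l))}) \<le> R * real B"
    by (rule acyclic_bound[where J="{1..K}" and u=\<pi> and e=e and Z=Z and dec=dec and enc=enc, OF len finite_atLeastAtMost efiles einj decj])
  define Bs where "Bs j = {b. b < B \<and> Tc Z K (e j, b) \<inter> \<pi> ` {1..j} = {}}" for j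
  have eqA: "{(e j, b) | j b. j \<in> {1..K} \<and> b < B \<and> (\<forall>l\<in>{1..K}. l \<le> j \<longrightarrow> (e j, b) \<notin> Z (\<pi> l))}
      = (\<Union>j\<in>{1..K}. (\<lambda>b. (e j, b)) ` Bs j)"
  proof -
    have cond: "(\<forall>l\<in>{1..K}. l \<le> j \<longrightarrow> (e j, b) \<notin> Z (\<pi> l)) \<longleftrightarrow> Tc Z K (e j, b) \<inter> \<pi> ` {1..j} = {}"
      if j: "j \<in> {1..K}" for j b
    proof -
      have pl: "\<pi> l \<in> {1..K}" if "l \<in> {1..K}" for l using permutes_in_image[OF \<pi>] that by simp
      show ?thesis
      proof
        assume H: "\<forall>l\<in>{1..K}. l \<le> j \<longrightarrow> (e j, b) \<notin> Z (\<pi> l)"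
        show "Tc Z K (e j, b) \<inter> \<pi> ` {1..j} = {}"
        proof (rule ccontr)
          assume "Tc Z K (e j, b) \<inter> \<pi> ` {1..j} \<noteq> {}"
          then obtain l where l: "l \<in> {1..j}" "(e j, b) \<in> Z (\<pi> l)" unfolding Tc_def by blast
          then show False using H j by auto
        qed
      next
        assume H: "Tc Z K (e j, b) \<inter> \<pi> ` {1..j} = {}"
        show "\<forall>l\<in>{1..K}. l \<le> j \<longrightarrow> (e j, b) \<notin> Z (\<pi> l)"
        proof (intro ballI impI notI)
          fix l assume l: "l \<in> {1..K}" "l \<le> j" "(e j, b) \<in> Z (\<pi> l)"
          then have "\<pi> l \<in> Tc Z K (e j, b)" unfolding Tc_def using pl by simp
          moreover have "\<pi> l \<in> \<pi> ` {1..j}" using l by auto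
          ultimately show False using H by blast
        qed
      qed
    qed
    show ?thesis unfolding Bs_def using cond by blast
  qed
  have cardA: "card (\<Union>j\<in>{1..K}. (\<lambda>b. (e j, b)) ` Bs j) = (\<Sum>j\<in>{1..K}. card (Bs j))"
  proof -
    have "card (\<Union>j\<in>{1..K}. (\<lambda>b. (e j, b)) ` Bs j) = (\<Sum>j\<in>{1..K}. card ((\<lambda>b. (e j, b)) ` Bs j))"
    proof (rule card_UN_disjoint)
      show "finite {1..K}" by simp
      show "\<forall>j\<in>{1..K}. finite ((\<lambda>b. (e j, b)) ` Bs j)" unfolding Bs_def by auto
      show "\<forall>j\<in>{1..K}. \<forall>j'\<in>{1..K}. j \<noteq> j' \<longrightarrow> (\<lambda>b. (e j, b)) ` Bs j \<inter> (\<lambda>b. (e j', b)) ` Bs j' = {}"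
        using einj unfolding inj_on_def by blast
    qed
    also have "\<dots> = (\<Sum>j\<in>{1..K}. card (Bs j))"
      by (rule sum.cong[OF refl], rule card_image) (auto intro: inj_onI)
    finally show ?thesis .
  qed
  have "real (card (\<Union>j\<in>{1..K}. (\<lambda>b. (e j, b)) ` Bs j)) \<le> R * real B" using AB eqA by metis
  then have "real (\<Sum>j\<in>{1..K}. card (Bs j)) \<le> R * real B" using cardA by metis
  then show ?thesis unfolding Bs_def e_def .
qed

lemma triple_sum:
  fixes h :: "nat \<Rightarrow> nat set \<Rightarrow> nat \<Rightarrow> 'b::comm_monoid_add"
  shows "(\<Sum>f\<in>A. \<Sum>S\<in>Cs. \<Sum>b<B. h f S b) = (\<Sum>x\<in>(A \<times> Cs) \<times> {..<B}. h (fst (fst x)) (snd (fst x)) (snd x))"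
proof -
  have "(\<Sum>f\<in>A. \<Sum>S\<in>Cs. \<Sum>b<B. h f S b) = (\<Sum>(f,S)\<in>A \<times> Cs. \<Sum>b<B. h f S b)"
    by (rule sum.cartesian_product)
  also have "\<dots> = (\<Sum>y\<in>A \<times> Cs. \<Sum>b<B. h (fst y) (snd y) b)"
    by (rule sum.cong) auto
  also have "\<dots> = (\<Sum>(y,b)\<in>(A \<times> Cs) \<times> {..<B}. h (fst y) (snd y) b)"
    by (rule sum.cartesian_product)
  also have "\<dots> = (\<Sum>x\<in>(A \<times> Cs) \<times> {..<B}. h (fst (fst x)) (snd (fst x)) (snd x))"
    by (rule sum.cong) auto
  finally show ?thesis .
qed

lemma files_eq: "files K \<alpha> F = {1..F} \<times> {S. S \<subseteq> {1..K} \<and> card S = \<alpha>}"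
  unfolding files_def by auto

lemma memory_sum:
  fixes Z :: "nat \<Rightarrow> (file_idx \<times> nat) set" and M :: real
  assumes plc: "\<forall>k\<in>users K. us_placement K \<alpha> F B M k (Z k)"
  shows "(\<Sum>x\<in>files K \<alpha> F \<times> {..<B}. real (card (Tc Z K x))) \<le> real K * M * real B"
proof -
  define X where "X = files K \<alpha> F \<times> {..<B}"
  have finF: "finite (files K \<alpha> F)" unfolding files_eq by (rule finite_cartesian_product) (auto intro: finite_subset[of _ "Pow {1..K}"])
  have fX: "finite X" unfolding X_def using finF by simp
  have sub: "Z k \<subseteq> X" if "k \<in> {1..K}" for k
    using plc that unfolding us_placement_def users_def X_def FDS_def by auto
  have "(\<Sum>x\<in>X. card (Tc Z K x)) = (\<Sum>x\<in>X. \<Sum>k\<in>{1..K}. if x \<in> Z k then 1 else 0)"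
  proof (rule sum.cong)
    fix x
    have "Tc Z K x = {1..K} \<inter> {k. x \<in> Z k}" unfolding Tc_def by auto
    then show "card (Tc Z K x) = (\<Sum>k\<in>{1..K}. if x \<in> Z k then 1 else 0)" by (simp add: sum.If_cases)
  qed simp
  also have "\<dots> = (\<Sum>k\<in>{1..K}. \<Sum>x\<in>X. if x \<in> Z k then 1 else 0)" by (rule sum.swap)
  also have "\<dots> = (\<Sum>k\<in>{1..K}. card (Z k))"
  proof (rule sum.cong)
    fix k assume k: "k \<in> {1..K}"
    have "X \<inter> {x. x \<in> Z k} = Z k" using sub[OF k] by auto
    then show "(\<Sum>x\<in>X. if x \<in> Z k then 1 else 0) = card (Z k)" using fX by (simp add: sum.If_cases)
  qed simp
  finally have e: "(\<Sum>x\<in>X. card (Tc Z K x)) = (\<Sum>k\<in>{1..K}. card (Z k))" .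
  have "(\<Sum>x\<in>X. real (card (Tc Z K x))) = (\<Sum>k\<in>{1..K}. real (card (Z k)))"
    using arg_cong[OF e, of real] by simp
  also have "\<dots> \<le> (\<Sum>k\<in>{1..K}. M * real B)"
    by (rule sum_mono) (use plc in \<open>auto simp: us_placement_def users_def\<close>)
  also have "\<dots> = real K * M * real B" by simp
  finally show ?thesis unfolding X_def .
qed




lemma weight_sum:
  assumes a: "1 \<le> \<alpha>" "\<alpha> \<le> K" and ST: "T \<subseteq> S" "S \<subseteq> {1..K}" "card S = \<alpha>"
  shows "real (\<Sum>j\<in>{1..K}. Wc K (Cj K \<alpha> j) {1..j} S T) = fact K * cR K \<alpha> (real (card T)) / real (K choose \<alpha>)"
proof -
  define t where "t = card T"
  have tle: "t \<le> \<alpha>" unfolding t_def using ST card_mono[of S T] finite_subset[OF ST(2)] by auto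
  have P: "(S, T) \<in> Pairs K \<alpha> t" unfolding Pairs_def t_def using ST by auto
  have "(\<Sum>j\<in>{1..K}. Wc K (Cj K \<alpha> j) {1..j} S T) * ((K choose \<alpha>) * (\<alpha> choose t))
      = (\<Sum>j\<in>{1..K}. Wc K (Cj K \<alpha> j) {1..j} S T * ((K choose \<alpha>) * (\<alpha> choose t)))"
    by (simp add: sum_distrib_right)
  also have "\<dots> = (\<Sum>j\<in>{1..K}. fact K * (card (Cj K \<alpha> j - {1..j}) choose t))"
  proof (rule sum.cong)
    fix j assume j: "j \<in> {1..K}"
    show "Wc K (Cj K \<alpha> j) {1..j} S T * ((K choose \<alpha>) * (\<alpha> choose t)) = fact K * (card (Cj K \<alpha> j - {1..j}) choose t)"
      by (rule Wc_value[OF _ _ P]) (use Cj_props[OF a] j in auto)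
  qed simp
  also have "\<dots> = fact K * ((\<alpha> choose (t+1)) + (K - \<alpha>) * ((\<alpha>-1) choose t))"
    using sum_choose_D[OF a, of t] by (simp add: sum_distrib_left[symmetric])
  finally have e: "(\<Sum>j\<in>{1..K}. Wc K (Cj K \<alpha> j) {1..j} S T) * ((K choose \<alpha>) * (\<alpha> choose t)) = fact K * ((\<alpha> choose (t+1)) + (K - \<alpha>) * ((\<alpha>-1) choose t))" .
  have p1: "real (K choose \<alpha>) > 0" using a by simp
  have p2: "real (\<alpha> choose t) > 0" using tle by simp
  have cr: "cR K \<alpha> (real t) = (real (\<alpha> choose (t + 1)) + real (K - \<alpha>) * real ((\<alpha> - 1) choose t)) / real (\<alpha> choose t)"
    using corner_R_cR[OF a tle] unfolding corner_R_def by simp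
  have e': "real (\<Sum>j\<in>{1..K}. Wc K (Cj K \<alpha> j) {1..j} S T) * (real (K choose \<alpha>) * real (\<alpha> choose t)) = fact K * (real (\<alpha> choose (t+1)) + real (K - \<alpha>) * real ((\<alpha>-1) choose t))"
    using arg_cong[OF e, of real] by (simp add: of_nat_mult)
  show ?thesis unfolding t_def[symmetric] cr using e' p1 p2 by (simp add: field_simps)
qed

lemma lower_bound:
  fixes K \<alpha> F :: nat and M R :: real
  assumes basic: "K \<ge> 1" "1 \<le> \<alpha>" "\<alpha> \<le> K" "F \<ge> 1" "num_files K \<alpha> F \<ge> K"
    and ach: "achievable_us K \<alpha> F M R"
  shows "R_LB K \<alpha> F M \<le> R"
proof -
  obtain B Z where B: "B > 0" and plc: "\<forall>k \<in> users K. us_placement K \<alpha> F B M k (Z k)"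
    and codes: "\<forall>d\<in>demands K \<alpha> F. \<exists>(enc :: library \<Rightarrow> bool list) (dec :: nat \<Rightarrow> bool list \<Rightarrow> cache_content \<Rightarrow> nat \<Rightarrow> bool).
             \<forall>W \<in> libraries K \<alpha> F B. real (length (enc W)) \<le> R * real B \<and>
                 (\<forall>k \<in> users K. \<forall>b < B. dec k (enc W) (cache_of (Z k) W) b = W (d k) b)"
    using ach unfolding achievable_us_def by blast
  define Perm where "Perm = {\<pi>. \<pi> permutes {1..K}}"
  define Cls where "Cls = {S. S \<subseteq> {1..K} \<and> card S = \<alpha>}"
  define \<tau> where "\<tau> = Tc Z K"
  define N where "N = num_files K \<alpha> F"
  have a: "1 \<le> \<alpha>" "\<alpha> \<le> K" using basic by auto
  have fP: "finite Perm" unfolding Perm_def by (rule finite_permutations) simp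
  have cP: "card Perm = fact K" unfolding Perm_def by (rule card_permutations) auto
  have fC: "finite Cls" unfolding Cls_def by (rule finite_subset[of _ "Pow {1..K}"]) auto
  have cC: "card Cls = K choose \<alpha>" unfolding Cls_def using n_subsets[of "{1..K}" \<alpha>] by simp
  define G where "G \<pi> c = (\<Sum>j\<in>{1..K}. card {b. b < B \<and> \<tau> (pf K \<alpha> F \<pi> c j, b) \<inter> \<pi> ` {1..j} = {}})" for \<pi> c
  have g1: "real (G \<pi> c) \<le> R * real B" if "\<pi> \<in> Perm" for \<pi> c
    unfolding G_def \<tau>_def by (rule config_bound[OF basic(2-5) codes]) (use that in \<open>simp add: Perm_def\<close>)
  have "real (\<Sum>\<pi>\<in>Perm. \<Sum>c<F. G \<pi> c) = (\<Sum>\<pi>\<in>Perm. \<Sum>c<F. real (G \<pi> c))" by simp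
  also have "\<dots> \<le> (\<Sum>\<pi>\<in>Perm. \<Sum>c<F. R * real B)"
    by (intro sum_mono) (use g1 in auto)
  also have "\<dots> = fact K * real F * (R * real B)" using cP by simp
  finally have h1: "real (\<Sum>\<pi>\<in>Perm. \<Sum>c<F. G \<pi> c) \<le> fact K * real F * (R * real B)" .
  have "(\<Sum>\<pi>\<in>Perm. \<Sum>c<F. G \<pi> c) = (\<Sum>j\<in>{1..K}. \<Sum>\<pi>\<in>Perm. \<Sum>c<F. card {b. b < B \<and> \<tau> (pf K \<alpha> F \<pi> c j, b) \<inter> \<pi> ` {1..j} = {}})"
  proof -
    have "(\<Sum>\<pi>\<in>Perm. \<Sum>c<F. G \<pi> c) = (\<Sum>\<pi>\<in>Perm. \<Sum>j\<in>{1..K}. \<Sum>c<F. card {b. b < B \<and> \<tau> (pf K \<alpha> F \<pi> c j, b) \<inter> \<pi> ` {1..j} = {}})"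
      unfolding G_def by (rule sum.cong[OF refl], rule sum.swap)
    also have "\<dots> = (\<Sum>j\<in>{1..K}. \<Sum>\<pi>\<in>Perm. \<Sum>c<F. card {b. b < B \<and> \<tau> (pf K \<alpha> F \<pi> c j, b) \<inter> \<pi> ` {1..j} = {}})"
      by (rule sum.swap)
    finally show ?thesis .
  qed
  also have "\<dots> = (\<Sum>j\<in>{1..K}. \<Sum>f\<in>{1..F}. \<Sum>S\<in>Cls. \<Sum>b<B. Wc K (Cj K \<alpha> j) {1..j} S (\<tau> ((f, S), b)))"
  proof (rule sum.cong[OF refl])
    fix j assume j: "j \<in> {1..K}"
    show "(\<Sum>\<pi>\<in>Perm. \<Sum>c<F. card {b. b < B \<and> \<tau> (pf K \<alpha> F \<pi> c j, b) \<inter> \<pi> ` {1..j} = {}})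
        = (\<Sum>f\<in>{1..F}. \<Sum>S\<in>Cls. \<Sum>b<B. Wc K (Cj K \<alpha> j) {1..j} S (\<tau> ((f, S), b)))"
      unfolding pf_def Perm_def Cls_def
      by (rule step4) (use Cj_props[OF a] j phi_range[OF basic(2-5) j] basic in auto)
  qed
  also have "\<dots> = (\<Sum>f\<in>{1..F}. \<Sum>S\<in>Cls. \<Sum>b<B. \<Sum>j\<in>{1..K}. Wc K (Cj K \<alpha> j) {1..j} S (\<tau> ((f, S), b)))"
  proof -
    have "(\<Sum>j\<in>{1..K}. \<Sum>f\<in>{1..F}. \<Sum>S\<in>Cls. \<Sum>b<B. Wc K (Cj K \<alpha> j) {1..j} S (\<tau> ((f, S), b)))
       = (\<Sum>f\<in>{1..F}. \<Sum>j\<in>{1..K}. \<Sum>S\<in>Cls. \<Sum>b<B. Wc K (Cj K \<alpha> j) {1..j} S (\<tau> ((f, S), b)))"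
      by (rule sum.swap)
    also have "\<dots> = (\<Sum>f\<in>{1..F}. \<Sum>S\<in>Cls. \<Sum>j\<in>{1..K}. \<Sum>b<B. Wc K (Cj K \<alpha> j) {1..j} S (\<tau> ((f, S), b)))"
      by (rule sum.cong[OF refl], rule sum.swap)
    also have "\<dots> = (\<Sum>f\<in>{1..F}. \<Sum>S\<in>Cls. \<Sum>b<B. \<Sum>j\<in>{1..K}. Wc K (Cj K \<alpha> j) {1..j} S (\<tau> ((f, S), b)))"
      by (rule sum.cong[OF refl], rule sum.cong[OF refl], rule sum.swap)
    finally show ?thesis .
  qed
  finally have eqG: "(\<Sum>\<pi>\<in>Perm. \<Sum>c<F. G \<pi> c) = (\<Sum>f\<in>{1..F}. \<Sum>S\<in>Cls. \<Sum>b<B. \<Sum>j\<in>{1..K}. Wc K (Cj K \<alpha> j) {1..j} S (\<tau> ((f, S), b)))" .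
  have sel: "\<tau> ((f, S), b) \<subseteq> S" for f S b
  proof
    fix k assume "k \<in> \<tau> ((f, S), b)"
    then have k: "k \<in> {1..K}" "((f, S), b) \<in> Z k" unfolding \<tau>_def Tc_def by auto
    then have "(f, S) \<in> FDS K \<alpha> F k" using plc unfolding us_placement_def users_def by auto
    then show "k \<in> S" unfolding FDS_def by simp
  qed
  have wv: "real (\<Sum>j\<in>{1..K}. Wc K (Cj K \<alpha> j) {1..j} S (\<tau> ((f, S), b))) = fact K * cR K \<alpha> (real (card (\<tau> ((f, S), b)))) / real (K choose \<alpha>)"
    if "S \<in> Cls" for f S b
    by (rule weight_sum[OF a sel]) (use that in \<open>auto simp: Cls_def\<close>)
  define X where "X = ({1..F} \<times> Cls) \<times> {..<B}"
  have fX: "finite X" unfolding X_def using fC by simp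
  have cX: "card X = N * B" unfolding X_def N_def num_files_def using cC by (simp add: card_cartesian_product)
  have "real (\<Sum>\<pi>\<in>Perm. \<Sum>c<F. G \<pi> c) = (\<Sum>f\<in>{1..F}. \<Sum>S\<in>Cls. \<Sum>b<B. real (\<Sum>j\<in>{1..K}. Wc K (Cj K \<alpha> j) {1..j} S (\<tau> ((f, S), b))))"
    unfolding eqG by simp
  also have "\<dots> = (\<Sum>f\<in>{1..F}. \<Sum>S\<in>Cls. \<Sum>b<B. fact K * cR K \<alpha> (real (card (\<tau> ((f, S), b)))) / real (K choose \<alpha>))"
    by (intro sum.cong refl) (use wv in auto)
  also have "\<dots> = (\<Sum>x\<in>X. fact K * cR K \<alpha> (real (card (\<tau> x))) / real (K choose \<alpha>))"
    unfolding X_def by (subst triple_sum) simp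
  also have "\<dots> = fact K / real (K choose \<alpha>) * (\<Sum>x\<in>X. cR K \<alpha> (real (card (\<tau> x))))"
    by (simp add: sum_distrib_left)
  finally have h2: "fact K / real (K choose \<alpha>) * (\<Sum>x\<in>X. cR K \<alpha> (real (card (\<tau> x)))) \<le> fact K * real F * (R * real B)"
    using h1 by simp
  have pK: "real (K choose \<alpha>) > 0" "(fact K :: real) > 0" using a by auto
  have hc: "(\<Sum>x\<in>X. cR K \<alpha> (real (card (\<tau> x)))) \<le> real N * R * real B"
  proof -
    have "(\<Sum>x\<in>X. cR K \<alpha> (real (card (\<tau> x)))) = real (K choose \<alpha>) / fact K * (fact K / real (K choose \<alpha>) * (\<Sum>x\<in>X. cR K \<alpha> (real (card (\<tau> x)))))"
      using pK by (simp add: field_simps)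
    also have "\<dots> \<le> real (K choose \<alpha>) / fact K * (fact K * real F * (R * real B))"
      by (rule mult_left_mono[OF h2]) (use pK in simp)
    also have "\<dots> = real N * R * real B" unfolding N_def num_files_def using pK by (simp add: field_simps)
    finally show ?thesis .
  qed
  have hm: "(\<Sum>x\<in>X. real (card (\<tau> x))) \<le> real K * M * real B"
  proof -
    have "X = files K \<alpha> F \<times> {..<B}" unfolding X_def files_eq Cls_def by simp
    then show ?thesis unfolding \<tau>_def using memory_sum[OF plc] by simp
  qed
  have Npos: "N > 0" unfolding N_def num_files_def using basic by simp
  define t0 where "t0 = min (\<alpha> - 1) (nat \<lfloor>M * real K / real (num_files K \<alpha> F)\<rfloor>)"
  have "cR K \<alpha> (real t0) + (real K * M / real N - real t0) * (cR K \<alpha> (real t0 + 1) - cR K \<alpha> (real t0)) \<le> R"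
    by (rule final_arith[OF fX cX Npos B hc hm a])
  then show ?thesis using R_LB_line[OF basic(1-4), of M] unfolding t0_def[symmetric] N_def by simp
qed

lemma achievable_exists:
  fixes M :: real
  assumes "M \<ge> 0"
  shows "achievable_us K \<alpha> F M (real K)"
  unfolding achievable_us_def
proof (intro exI[of _ "1::nat"] conjI exI[of _ "\<lambda>k. {}"] ballI)
  show "(0::nat) < 1" by simp
  fix k show "us_placement K \<alpha> F 1 M k {}" unfolding us_placement_def using assms by simp
next
  fix d assume "d \<in> demands K \<alpha> F"
  show "\<exists>(enc :: library \<Rightarrow> bool list) (dec :: nat \<Rightarrow> bool list \<Rightarrow> cache_content \<Rightarrow> nat \<Rightarrow> bool).
             \<forall>W \<in> libraries K \<alpha> F 1. real (length (enc W)) \<le> real K * real 1 \<and>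
                 (\<forall>k \<in> users K. \<forall>b < 1. dec k (enc W) (cache_of ((\<lambda>k. {}) k) W) b = W (d k) b)"
  proof (intro exI[of _ "\<lambda>W. map (\<lambda>i. W (d (Suc i)) 0) [0..<K]"] exI[of _ "\<lambda>k msg cache b. msg ! (k - 1)"] ballI conjI allI impI)
    fix W :: library
    show "real (length (map (\<lambda>i. W (d (Suc i)) 0) [0..<K])) \<le> real K * real 1" by simp
    fix k b assume k: "k \<in> users K" and b: "b < (1::nat)"
    have k1: "k - 1 < K" "Suc (k - 1) = k" using k unfolding users_def by auto
    have "map (\<lambda>i. W (d (Suc i)) 0) [0..<K] ! (k - 1) = W (d (Suc (k - 1))) 0" using k1(1) by (simp only: nth_map length_upt nth_upt) simp
    then have "map (\<lambda>i. W (d (Suc i)) 0) [0..<K] ! (k - 1) = W (d k) 0" using k1(2) by simp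
    then show "map (\<lambda>i. W (d (Suc i)) 0) [0..<K] ! (k - 1) = W (d k) b" using b by simp
  qed
qed

theorem theorem1:
  fixes K \<alpha> F :: nat
  assumes "K \<ge> 1" and "1 \<le> \<alpha>" and "\<alpha> \<le> K" and "F \<ge> 1"
    and "num_files K \<alpha> F \<ge> K"
  shows "(\<forall>M::real. 0 \<le> M \<and> M \<le> real \<alpha> * real (num_files K \<alpha> F) / real K
            \<longrightarrow> R_LB K \<alpha> F M \<le> R_opt_us K \<alpha> F M)
      \<and> (\<forall>t \<le> \<alpha>. let \<gamma> = real t / real K; \<gamma>\<^sub>\<alpha> = real K * \<gamma> / real \<alpha> in
            R_LB K \<alpha> F (corner_M K \<alpha> F t) = corner_R K \<alpha> t
          \<and> corner_R K \<alpha> t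
              = real K * (1 - \<gamma>\<^sub>\<alpha>) / (real K * \<gamma> + 1) * ((real K - real \<alpha>) * \<gamma> + 1))"
proof (intro conjI allI impI)
  fix M :: real assume M: "0 \<le> M \<and> M \<le> real \<alpha> * real (num_files K \<alpha> F) / real K"
  have ne: "{R. achievable_us K \<alpha> F M R} \<noteq> {}" using achievable_exists[of M K \<alpha> F] M by blast
  show "R_LB K \<alpha> F M \<le> R_opt_us K \<alpha> F M"
    unfolding R_opt_us_def
    by (rule cInf_greatest[OF ne]) (use lower_bound[OF assms] in blast)
next
  fix t assume "t \<le> \<alpha>"
  then show "let \<gamma> = real t / real K; \<gamma>\<^sub>\<alpha> = real K * \<gamma> / real \<alpha> in
            R_LB K \<alpha> F (corner_M K \<alpha> F t) = corner_R K \<alpha> t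
          \<and> corner_R K \<alpha> t
              = real K * (1 - \<gamma>\<^sub>\<alpha>) / (real K * \<gamma> + 1) * ((real K - real \<alpha>) * \<gamma> + 1)"
    using part2[OF assms(1-4)] by blast
qed


end
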